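(* For all integers $i,j,k,m\ge0$: if $\omega_i+\omega_j-\omega_k-\omega_m=0$, or $\omega_i-\omega_j+\omega_k-\omega_m=0$, or $\omega_i-\omega_j-\omega_k+\omega_m=0$, then $C_{ijkm}=\omega_{\min\{i,j,k,m\}}$.
   Context: $\omega_n=n+1$ and $C_{ijkm}=\frac2\pi\int_{-1}^1U_i(y)U_j(y)U_k(y)U_m(y)\sqrt{1-y^2}\,dy$, $U_n$ the Chebyshev polynomial of the second kind of degree $n$. *)

theory Defs
  imports "HOL-Analysis.Analysis"
begin

fun chebU :: "nat \<Rightarrow> real \<Rightarrow> real" where
  "chebU 0 y = 1"
| "chebU (Suc 0) y = 2 * y"
| "chebU (Suc (Suc n)) y = 2 * y * chebU (Suc n) y - chebU n y"

definition omega :: "nat \<Rightarrow> real" where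
  "omega n = real n + 1"

definition Ccoef :: "nat \<Rightarrow> nat \<Rightarrow> nat \<Rightarrow> nat \<Rightarrow> real" where
  "Ccoef i j k m = 2 / pi * integral {-1..1}
     (\<lambda>y. chebU i y * chebU j y * chebU k y * chebU m y * sqrt (1 - y\<^sup>2))"

end

theory Submission
  imports Defs
begin


fun dU :: "nat \<Rightarrow> real \<Rightarrow> real" where
  "dU 0 y = 0"
| "dU (Suc 0) y = 2"
| "dU (Suc (Suc n)) y = 2 * chebU (Suc n) y + 2 * y * dU (Suc n) y - dU n y"

fun Um1 :: "nat \<Rightarrow> real \<Rightarrow> real" where
  "Um1 0 y = 0"
| "Um1 (Suc n) y = chebU n y"

lemma Um1_rec: "Um1 n y = 2 * y * chebU n y - chebU (Suc n) y"
  by (cases n; cases "n - 1") auto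

lemma chebU_deriv2:
  "(chebU n has_real_derivative dU n y) (at y) \<and> (chebU (Suc n) has_real_derivative dU (Suc n) y) (at y)"
proof (induction n arbitrary: y)
  case 0
  have "((\<lambda>y. 2 * y) has_real_derivative 2) (at y)"
    by (auto intro!: derivative_eq_intros)
  then show ?case by (simp add: fun_eq_iff)
next
  case (Suc n)
  have e: "chebU (Suc (Suc n)) = (\<lambda>y. 2 * y * chebU (Suc n) y - chebU n y)"
    by (simp add: fun_eq_iff)
  have "((\<lambda>y. 2 * y * chebU (Suc n) y - chebU n y) has_real_derivative
     (2 * chebU (Suc n) y + 2 * y * dU (Suc n) y - dU n y)) (at y)"
    using Suc.IH
    by (auto intro!: derivative_eq_intros)
  then show ?case using Suc.IH by (simp add: e)
qed

lemma chebU_deriv: "(chebU n has_real_derivative dU n y) (at y)"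
  using chebU_deriv2 by blast

lemma cont_chebU [continuous_intros]: "continuous_on S (chebU n)"
  by (meson DERIV_isCont chebU_deriv continuous_at_imp_continuous_on)

lemma Lident2:
  "2 * ((1 - y\<^sup>2) * dU n y - y * chebU n y) = - (real n + 1) * (chebU (Suc n) y - Um1 n y)
 \<and> 2 * ((1 - y\<^sup>2) * dU (Suc n) y - y * chebU (Suc n) y) = - (real n + 2) * (chebU (Suc (Suc n)) y - Um1 (Suc n) y)"
proof (induction n)
  case 0
  then show ?case by (simp add: power2_eq_square algebra_simps)
next
  case (Suc n)
  define A where "A = chebU (Suc n) y"
  define B where "B = chebU n y"
  have U2: "chebU (Suc (Suc n)) y = 2*y*A - B" by (simp add: A_def B_def)
  have U3: "chebU (Suc (Suc (Suc n))) y = 2*y*(2*y*A - B) - A" by (simp add: A_def B_def)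
  have m: "Um1 n y = 2*y*B - A" by (simp add: Um1_rec A_def B_def)
  have d: "dU (Suc (Suc n)) y = 2 * A + 2 * y * dU (Suc n) y - dU n y" by (simp add: A_def)
  define W where "W = (1 - y\<^sup>2) * dU n y"
  define X where "X = (1 - y\<^sup>2) * dU (Suc n) y"
  have h1: "2 * W = 2 * y * B - (real n + 1) * (2 * A - 2 * y * B)"
    using Suc.IH m by (simp add: A_def B_def W_def algebra_simps)
  have h2: "2 * X = 2 * y * A - (real n + 2) * (2*y*A - 2 * B)"
    using Suc.IH U2 by (simp add: A_def B_def X_def algebra_simps)
  have "2 * ((1 - y\<^sup>2) * dU (Suc (Suc n)) y - y * chebU (Suc (Suc n)) y)
      = 4*(1 - y\<^sup>2)*A + 2*y*(2*X) - 2*W - 2*y*(2*y*A - B)"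
    unfolding d U2 X_def W_def by (simp add: algebra_simps)
  also have "\<dots> = - (real n + 3) * ((2*y*(2*y*A - B) - A) - A)"
    unfolding h1 h2 by (simp add: power2_eq_square algebra_simps)
  also have "\<dots> = - (real (Suc n) + 2) * (chebU (Suc (Suc (Suc n))) y - Um1 (Suc (Suc n)) y)"
    unfolding U3 by (simp add: A_def)
  finally show ?case using Suc.IH by simp
qed


lemma int0: "((\<lambda>y. sqrt (1 - y\<^sup>2)) has_integral pi / 2) {-1..1}"
proof -
  define F where "F y = (y * sqrt (1 - y\<^sup>2) + arcsin y) / 2" for y :: real
  have "((\<lambda>y. sqrt (1 - y\<^sup>2)) has_integral F 1 - F (-1)) {-1..1}"
  proof (rule fundamental_theorem_of_calculus_interior)
    show "continuous_on {-1..1} F" unfolding F_def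
      by (intro continuous_intros) (auto simp: abs_square_le_1)
    fix y :: real assume y: "y \<in> {-1<..<1}"
    then have p: "0 < 1 - y\<^sup>2" by (simp add: abs_square_less_1 abs_less_iff)
    have s2: "sqrt (1 - y\<^sup>2) ^ 2 = 1 - y\<^sup>2" using p by simp
    have sp: "sqrt (1 - y\<^sup>2) > 0" using p by simp
    have e: "inverse (sqrt (1 - y\<^sup>2)) * y * y = inverse (sqrt (1 - y\<^sup>2)) - sqrt (1 - y\<^sup>2)"
    proof -
      have "sqrt (1 - y\<^sup>2) * sqrt (1 - y\<^sup>2) = 1 - y * y" using s2 by (simp add: power2_eq_square)
      then show ?thesis using sp by (simp add: field_simps)
    qed
    have "(F has_real_derivative sqrt (1 - y\<^sup>2)) (at y)"
      unfolding F_def[abs_def]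
      using y p apply (auto intro!: derivative_eq_intros)
      apply (simp only: e)
      by (simp add: algebra_simps)
    then show "(F has_vector_derivative sqrt (1 - y\<^sup>2)) (at y)"
      by (simp add: has_real_derivative_iff_has_vector_derivative)
  qed simp
  moreover have "F 1 - F (-1) = pi / 2" by (simp add: F_def)
  ultimately show ?thesis by simp
qed


lemma linalg:
  fixes t d1 d2 c1 c2 y u1 u2 :: real
  assumes "c1 \<noteq> 0" "c2 \<noteq> 0"
  shows "(1-t)*(-(d1/c1 - d2/c2)/2) - y*(-(u1/c1 - u2/c2)/2) = -(((1-t)*d1 - y*u1)/c1 - ((1-t)*d2 - y*u2)/c2)/2"
  using assms by (simp add: field_simps)

lemma keyalg:
  "(1 - y\<^sup>2) * (- (dU q y / (real q + 1) - dU (Suc (Suc q)) y / (real q + 3)) / 2)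
   - y * (- (chebU q y / (real q + 1) - chebU (Suc (Suc q)) y / (real q + 3)) / 2)
   = (1 - y\<^sup>2) * chebU (Suc q) y"
proof -
  define a where "a = (1 - y\<^sup>2) * dU q y - y * chebU q y"
  define b where "b = (1 - y\<^sup>2) * dU (Suc (Suc q)) y - y * chebU (Suc (Suc q)) y"
  have L0: "2 * a = - (real q + 1) * (chebU (Suc q) y - Um1 q y)"
    using Lident2[of y q] by (simp add: a_def)
  have L2: "2 * b = - (real q + 3) * (chebU (Suc (Suc (Suc q))) y - chebU (Suc q) y)"
    using Lident2[of y "Suc q"] by (simp add: b_def add.commute)
  have a': "a / (real q + 1) = - (chebU (Suc q) y - Um1 q y) / 2"
    using L0 by (simp add: field_simps)
  have b': "b / (real q + 3) = - (chebU (Suc (Suc (Suc q))) y - chebU (Suc q) y) / 2"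
    using L2 by (simp add: field_simps)
  have "(1 - y\<^sup>2) * (- (dU q y / (real q + 1) - dU (Suc (Suc q)) y / (real q + 3)) / 2)
   - y * (- (chebU q y / (real q + 1) - chebU (Suc (Suc q)) y / (real q + 3)) / 2)
   = - (a / (real q + 1) - b / (real q + 3)) / 2"
    unfolding a_def b_def by (rule linalg) auto
  also have "\<dots> = (1 - y\<^sup>2) * chebU (Suc q) y"
    unfolding a' b' Um1_rec by (simp add: power2_eq_square field_simps)
  finally show ?thesis .
qed

lemma intp: "((\<lambda>y. chebU (Suc q) y * sqrt (1 - y\<^sup>2)) has_integral 0) {-1..1}"
proof -
  define P where "P y = - (chebU q y / (real q + 1) - chebU (Suc (Suc q)) y / (real q + 3)) / 2" for y :: real
  define P' where "P' y = - (dU q y / (real q + 1) - dU (Suc (Suc q)) y / (real q + 3)) / 2" for y :: real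
  define F where "F y = sqrt (1 - y\<^sup>2) * P y" for y :: real
  have "((\<lambda>y. chebU (Suc q) y * sqrt (1 - y\<^sup>2)) has_integral F 1 - F (-1)) {-1..1}"
  proof (rule fundamental_theorem_of_calculus_interior)
    show "continuous_on {-1..1} F" unfolding F_def P_def
      by (intro continuous_intros) auto
    fix y :: real assume y: "y \<in> {-1<..<1}"
    then have p: "0 < 1 - y\<^sup>2" by (simp add: abs_square_less_1 abs_less_iff)
    have s2: "sqrt (1 - y\<^sup>2) ^ 2 = 1 - y\<^sup>2" using p by simp
    have sp: "sqrt (1 - y\<^sup>2) > 0" using p by simp
    have dP: "(P has_real_derivative P' y) (at y)"
      unfolding P_def[abs_def] P'_def
      by (intro DERIV_cdivide DERIV_minus DERIV_diff chebU_deriv)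
    have dg: "((\<lambda>y. 1 - y\<^sup>2) has_real_derivative (- (2 * y))) (at y)"
      by (auto intro!: derivative_eq_intros)
    have ds: "((\<lambda>y. sqrt (1 - y\<^sup>2)) has_real_derivative inverse (sqrt (1 - y\<^sup>2)) / 2 * (- (2 * y))) (at y)"
      by (rule DERIV_chain2[OF DERIV_real_sqrt[OF p] dg])
    have "(F has_real_derivative (sqrt (1 - y\<^sup>2) * P' y + inverse (sqrt (1 - y\<^sup>2)) / 2 * (- (2 * y)) * P y)) (at y)"
      unfolding F_def[abs_def] by (rule DERIV_mult'[OF ds dP])
    moreover have "sqrt (1 - y\<^sup>2) * P' y + inverse (sqrt (1 - y\<^sup>2)) / 2 * (- (2 * y)) * P y = chebU (Suc q) y * sqrt (1 - y\<^sup>2)"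
    proof -
      have "sqrt (1 - y\<^sup>2) * P' y + inverse (sqrt (1 - y\<^sup>2)) / 2 * (- (2 * y)) * P y
          = ((sqrt (1 - y\<^sup>2))^2 * P' y - y * P y) / sqrt (1 - y\<^sup>2)"
        using sp by (simp add: field_simps power2_eq_square)
      also have "\<dots> = (1 - y\<^sup>2) * chebU (Suc q) y / sqrt (1 - y\<^sup>2)"
        unfolding s2 P_def P'_def keyalg ..
      also have "\<dots> = chebU (Suc q) y * sqrt (1 - y\<^sup>2)"
        using sp s2 by (simp add: field_simps power2_eq_square)
      finally show ?thesis .
    qed
    ultimately show "(F has_vector_derivative chebU (Suc q) y * sqrt (1 - y\<^sup>2)) (at y)"
      by (simp add: has_real_derivative_iff_has_vector_derivative)
  qed simp
  moreover have "F 1 - F (-1) = 0" by (simp add: F_def)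
  ultimately show ?thesis by simp
qed


lemma two_y_U: "2 * y * chebU (Suc n) y = chebU (Suc (Suc n)) y + chebU n y"
  by simp

lemma cg_aux:
  "chebU a y * chebU (a + d) y = (\<Sum>r\<le>a. chebU (d + 2*r) y) \<and>
   chebU (Suc a) y * chebU (Suc a + d) y = (\<Sum>r\<le>Suc a. chebU (d + 2*r) y)"
proof (induction a arbitrary: d)
  case 0
  show ?case using two_y_U[of y d] by (simp add: add.commute)
next
  case (Suc a)
  have IH1: "chebU (Suc a) y * chebU (Suc a + (d+2)) y = (\<Sum>r\<le>Suc a. chebU (d + 2 + 2*r) y)"
    using Suc.IH[of "d+2"] by simp
  have IH2: "chebU (Suc a) y * chebU (Suc a + d) y = (\<Sum>r\<le>Suc a. chebU (d + 2*r) y)"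
    using Suc.IH[of d] by simp
  have IH3: "chebU a y * chebU (a + (d+2)) y = (\<Sum>r\<le>a. chebU (d + 2 + 2*r) y)"
    using Suc.IH[of "d+2"] by simp
  have e1: "chebU (Suc (Suc a)) y * chebU (Suc (Suc a) + d) y
     = chebU (Suc a) y * (2 * y * chebU (Suc (Suc a) + d) y) - chebU a y * chebU (Suc (Suc a) + d) y"
    by (simp add: algebra_simps)
  have e2: "2 * y * chebU (Suc (Suc a) + d) y = chebU (Suc a + (d+2)) y + chebU (Suc a + d) y"
    using two_y_U[of y "Suc a + d"] by simp
  have e3: "chebU (Suc (Suc a) + d) y = chebU (a + (d+2)) y" by simp
  have "chebU (Suc (Suc a)) y * chebU (Suc (Suc a) + d) y
     = (\<Sum>r\<le>Suc a. chebU (d + 2 + 2*r) y) + (\<Sum>r\<le>Suc a. chebU (d + 2*r) y) - (\<Sum>r\<le>a. chebU (d + 2 + 2*r) y)"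
    unfolding e1 e2 distrib_left IH1 IH2 by (simp only: e3 IH3)
  also have "\<dots> = (\<Sum>r\<le>Suc (Suc a). chebU (d + 2*r) y)"
    by (simp add: algebra_simps)
  finally show ?case using Suc.IH[of d] by simp
qed

lemma cg: "chebU a y * chebU b y = (\<Sum>r\<le>min a b. chebU (max a b - min a b + 2*r) y)"
proof (cases "a \<le> b")
  case True
  then show ?thesis using cg_aux[of a y "b - a"] by simp
next
  case False
  then show ?thesis using cg_aux[of b y "a - b"] by (simp add: mult.commute)
qed

lemma intU: "((\<lambda>y. chebU p y * sqrt (1 - y\<^sup>2)) has_integral (if p = 0 then pi/2 else 0)) {-1..1}"
  using int0 intp[of "p - 1"] by (cases p) auto

lemma orth: "((\<lambda>y. chebU l y * chebU l' y * sqrt (1 - y\<^sup>2)) has_integral (if l = l' then pi/2 else 0)) {-1..1}"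
proof -
  have "((\<lambda>y. \<Sum>r\<le>min l l'. chebU (max l l' - min l l' + 2*r) y * sqrt (1 - y\<^sup>2)) has_integral
     (\<Sum>r\<le>min l l'. (if max l l' - min l l' + 2*r = 0 then pi/2 else 0))) {-1..1}"
    by (intro has_integral_sum intU) auto
  moreover have "(\<Sum>r\<le>min l l'. (if max l l' - min l l' + 2*r = 0 then pi/2 else 0)) = (if l = l' then pi/2 else 0)"
  proof -
    have "(\<Sum>r\<le>min l l'. (if max l l' - min l l' + 2*r = 0 then pi/2 else 0))
       = (\<Sum>r\<le>min l l'. (if r = 0 then (if l = l' then pi/2 else 0) else 0))"
      by (intro sum.cong) auto
    then show ?thesis by simp
  qed
  ultimately show ?thesis by (simp add: cg sum_distrib_right)
qed


lemma Cformula: "Ccoef i j k m = (\<Sum>r\<le>min i j. \<Sum>r'\<le>min k m.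
   (if max i j - min i j + 2*r = max k m - min k m + 2*r' then 1 else 0))"
proof -
  let ?l = "\<lambda>r. max i j - min i j + 2*r"
  let ?l' = "\<lambda>r'. max k m - min k m + 2*r'"
  have eq: "(\<lambda>y. chebU i y * chebU j y * chebU k y * chebU m y * sqrt (1 - y\<^sup>2))
     = (\<lambda>y. \<Sum>r\<le>min i j. \<Sum>r'\<le>min k m. chebU (?l r) y * chebU (?l' r') y * sqrt (1 - y\<^sup>2))"
  proof
    fix y
    have "chebU i y * chebU j y * chebU k y * chebU m y * sqrt (1 - y\<^sup>2)
       = (chebU i y * chebU j y) * (chebU k y * chebU m y) * sqrt (1 - y\<^sup>2)" by (simp add: ac_simps)
    also have "\<dots> = (\<Sum>r\<le>min i j. \<Sum>r'\<le>min k m. chebU (?l r) y * chebU (?l' r') y * sqrt (1 - y\<^sup>2))"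
      apply (simp only: cg[of i y j] cg[of k y m] sum_product)
      by (simp only: sum_distrib_right)
    finally show "chebU i y * chebU j y * chebU k y * chebU m y * sqrt (1 - y\<^sup>2)
       = (\<Sum>r\<le>min i j. \<Sum>r'\<le>min k m. chebU (?l r) y * chebU (?l' r') y * sqrt (1 - y\<^sup>2))" .
  qed
  have "((\<lambda>y. \<Sum>r\<le>min i j. \<Sum>r'\<le>min k m. chebU (?l r) y * chebU (?l' r') y * sqrt (1 - y\<^sup>2))
     has_integral (\<Sum>r\<le>min i j. \<Sum>r'\<le>min k m. (if ?l r = ?l' r' then pi/2 else 0))) {-1..1}"
    by (intro has_integral_sum orth) auto
  then have "integral {-1..1} (\<lambda>y. chebU i y * chebU j y * chebU k y * chebU m y * sqrt (1 - y\<^sup>2))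
     = (\<Sum>r\<le>min i j. \<Sum>r'\<le>min k m. (if ?l r = ?l' r' then pi/2 else 0))"
    unfolding eq by (rule integral_unique)
  then show ?thesis unfolding Ccoef_def
    by (simp add: sum_distrib_left if_distrib cong: if_cong)
qed

lemma count_le: "(a::nat) \<le> c \<Longrightarrow> (\<Sum>r\<le>a. \<Sum>r'\<le>c. (if r' + a = r + c then 1 else 0)) = real a + 1"
proof -
  assume ac: "a \<le> c"
  have "(\<Sum>r'\<le>c. (if r' + a = r + c then 1 else 0)) = (1::real)" if "r \<le> a" for r
  proof -
    have "(\<Sum>r'\<le>c. (if r' + a = r + c then 1 else 0)) = (\<Sum>r'\<le>c. (if r' = r + c - a then 1 else (0::real)))"
      using ac by (intro sum.cong) auto
    also have "\<dots> = 1" using that ac by (simp add: sum.delta)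
    finally show ?thesis .
  qed
  then have "(\<Sum>r\<le>a. \<Sum>r'\<le>c. (if r' + a = r + c then 1 else 0)) = (\<Sum>r\<le>a. (1::real))"
    by (intro sum.cong) auto
  then show ?thesis by simp
qed

lemma count: "(\<Sum>r\<le>a. \<Sum>r'\<le>c. (if r' + a = r + c then 1 else 0)) = real (min a c) + 1"
proof (cases "a \<le> c")
  case True
  then show ?thesis using count_le by simp
next
  case False
  have "(\<Sum>r\<le>a. \<Sum>r'\<le>c. (if r' + a = r + c then 1 else (0::real)))
     = (\<Sum>r'\<le>c. \<Sum>r\<le>a. (if r + c = r' + a then 1 else 0))"
    by (subst sum.swap) (intro sum.cong refl, auto)
  also have "\<dots> = real c + 1" using False count_le[of c a] by simp
  finally show ?thesis using False by simp
qed

lemma core: "i + j = k + m \<Longrightarrow> Ccoef i j k m = omega (Min {i, j, k, m})"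
proof -
  assume s: "i + j = k + m"
  have "Ccoef i j k m = (\<Sum>r\<le>min i j. \<Sum>r'\<le>min k m. (if r' + min i j = r + min k m then 1 else 0))"
    unfolding Cformula using s by (intro sum.cong refl) auto
  also have "\<dots> = real (min (min i j) (min k m)) + 1" by (rule count)
  also have "\<dots> = omega (Min {i, j, k, m})" by (simp add: omega_def min.assoc)
  finally show ?thesis .
qed

theorem lemma5p2:
  fixes i j k m :: nat
  assumes "omega i + omega j - omega k - omega m = 0
        \<or> omega i - omega j + omega k - omega m = 0
        \<or> omega i - omega j - omega k + omega m = 0"
  shows "Ccoef i j k m = omega (Min {i, j, k, m})"
proof -
  have c1: "Ccoef i j k m = Ccoef i k j m" "Ccoef i j k m = Ccoef i m j k"
    unfolding Ccoef_def by (simp_all add: ac_simps)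
  have s1: "{i, k, j, m} = {i, j, k, m}" "{i, m, j, k} = {i, j, k, m}" by auto
  from assms consider "i + j = k + m" | "i + k = j + m" | "i + m = j + k"
    unfolding omega_def by linarith
  then show ?thesis
  proof cases
    case 1 then show ?thesis by (rule core)
  next
    case 2 then show ?thesis using core[of i k j m] c1 s1 by simp
  next
    case 3 then show ?thesis using core[of i m j k] c1 s1 by simp
  qed
qed

end
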